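(* Let $\mathcal D$ be universal with at least two blocks, let $\mathcal B$ be the block containing $\min(\mathcal D\setminus\{0\})$ and $\mathbf m=\max\mathcal B$. Let $\mathrm M=(M,d)\in\mathfrak U_{\mathcal D}$, let $a\in M$, and let $X=\{x\in M: d(a,x)<\mathbf m\}$. Then the subspace of $\mathrm M$ on $M\setminus X$ is a copy of $\mathrm M$ in $\mathrm M$ (i.e. is isometric to $\mathrm M$).
   Context: $\mathcal D$ is a finite subset of $\mathbb R_{\ge0}$ containing $0$. $\mathfrak U_{\mathcal D}$ is the class of countable homogeneous metric spaces (every isometry between finite subspaces extends to an isometry of the space onto itself) with distance set exactly $\mathcal D$ into which every finite metric space with distances in $\mathcal D$ embeds isometrically; $\mathcal D$ is universal if this class is nonempty. For $r\in\mathcal D$ with $r<\max\mathcal D$, $r^{+}$ is the smallest element of $\mathcal D$ larger than $r$; for $r>0$, $r^{-}$ is the largest element of $\mathcal D$ smaller than $r$. A block of $\mathcal D$ is a nonempty set $\mathcal B=\{b_0<b_1<\dots<b_n\}\subseteq\mathcal D\setminus\{0\}$ such that $b_0>2b_0^{-}$, $b_{i+1}=b_i^{+}$ for all $i<n$, and $b_i+b_0\ge b_{i+1}$ for all $i<n$; for universal $\mathcal D$ the blocks partition $\mathcal D\setminus\{0\}$. *)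

theory Defs
  imports Complex_Main "HOL-Library.Countable_Set"
begin

definition metric_on :: "'a set \<Rightarrow> ('a \<Rightarrow> 'a \<Rightarrow> real) \<Rightarrow> bool" where
  "metric_on M d \<longleftrightarrow>
     (\<forall>x\<in>M. \<forall>y\<in>M. d x y \<ge> 0 \<and> (d x y = 0 \<longleftrightarrow> x = y) \<and> d x y = d y x) \<and>
     (\<forall>x\<in>M. \<forall>y\<in>M. \<forall>z\<in>M. d x z \<le> d x y + d y z)"

definition dist_set :: "'a set \<Rightarrow> ('a \<Rightarrow> 'a \<Rightarrow> real) \<Rightarrow> real set" where
  "dist_set M d = {d x y | x y. x \<in> M \<and> y \<in> M}"

definition isometry_onto :: "'a set \<Rightarrow> ('a \<Rightarrow> 'a \<Rightarrow> real) \<Rightarrow> 'b set \<Rightarrow> ('b \<Rightarrow> 'b \<Rightarrow> real) \<Rightarrow> ('a \<Rightarrow> 'b) \<Rightarrow> bool" where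
  "isometry_onto A d B e f \<longleftrightarrow> bij_betw f A B \<and> (\<forall>x\<in>A. \<forall>y\<in>A. e (f x) (f y) = d x y)"

definition homogeneous :: "'a set \<Rightarrow> ('a \<Rightarrow> 'a \<Rightarrow> real) \<Rightarrow> bool" where
  "homogeneous M d \<longleftrightarrow>
     (\<forall>A B f. finite A \<and> A \<subseteq> M \<and> B \<subseteq> M \<and> isometry_onto A d B d f \<longrightarrow>
        (\<exists>g. isometry_onto M d M d g \<and> (\<forall>x\<in>A. g x = f x)))"

(* every finite metric space with distances in D embeds isometrically into (M,d);
   finite metric spaces are represented (up to isometry) with points in nat *)
definition embeds_all_finite :: "real set \<Rightarrow> 'a set \<Rightarrow> ('a \<Rightarrow> 'a \<Rightarrow> real) \<Rightarrow> bool" where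
  "embeds_all_finite D M d \<longleftrightarrow>
     (\<forall>(F :: nat set) e. finite F \<and> metric_on F e \<and> dist_set F e \<subseteq> D \<longrightarrow>
        (\<exists>g. g ` F \<subseteq> M \<and> isometry_onto F e (g ` F) d g))"

definition in_U :: "real set \<Rightarrow> 'a set \<Rightarrow> ('a \<Rightarrow> 'a \<Rightarrow> real) \<Rightarrow> bool" where
  "in_U D M d \<longleftrightarrow> countable M \<and> metric_on M d \<and> homogeneous M d \<and>
     dist_set M d = D \<and> embeds_all_finite D M d"

definition dist_candidate :: "real set \<Rightarrow> bool" where
  "dist_candidate D \<longleftrightarrow> finite D \<and> 0 \<in> D \<and> (\<forall>x\<in>D. 0 \<le> x)"

(* D universal: U_D nonempty (countable spaces may be taken with points in nat) *)
definition universal_dist :: "real set \<Rightarrow> bool" where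
  "universal_dist D \<longleftrightarrow> (\<exists>(M :: nat set) d. in_U D M d)"

definition succ_in :: "real set \<Rightarrow> real \<Rightarrow> real" where
  "succ_in D r = Min {x \<in> D. r < x}"

definition pred_in :: "real set \<Rightarrow> real \<Rightarrow> real" where
  "pred_in D r = Max {x \<in> D. x < r}"

(* the conditions in the definition of a block, B = {b_0 < ... < b_n}:
   B consists of consecutive elements of D, b_0 > 2 b_0^-, and b_i + b_0 >= b_{i+1} *)
definition block_cond :: "real set \<Rightarrow> real set \<Rightarrow> bool" where
  "block_cond D B \<longleftrightarrow> B \<noteq> {} \<and> B \<subseteq> D - {0} \<and>
     Min B > 2 * pred_in D (Min B) \<and>
     (\<forall>b\<in>B. b < Max B \<longrightarrow> succ_in D b \<in> B \<and> succ_in D b \<le> b + Min B)"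

(* blocks are the maximal such sets (so that they partition D - {0}) *)
definition is_block :: "real set \<Rightarrow> real set \<Rightarrow> bool" where
  "is_block D B \<longleftrightarrow> block_cond D B \<and> (\<forall>B'. block_cond D B' \<and> B \<subseteq> B' \<longrightarrow> B' = B)"

end

theory Submission
  imports Defs
begin

lemma metric_sym: "metric_on M d \<Longrightarrow> u \<in> M \<Longrightarrow> v \<in> M \<Longrightarrow> d u v = d v u"
  unfolding metric_on_def by simp
lemma metric_zero: "metric_on M d \<Longrightarrow> u \<in> M \<Longrightarrow> v \<in> M \<Longrightarrow> d u v = 0 \<longleftrightarrow> u = v"
  unfolding metric_on_def by simp
lemma metric_nonneg: "metric_on M d \<Longrightarrow> u \<in> M \<Longrightarrow> v \<in> M \<Longrightarrow> d u v \<ge> 0"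
  unfolding metric_on_def by simp
lemma metric_tri: "metric_on M d \<Longrightarrow> u \<in> M \<Longrightarrow> v \<in> M \<Longrightarrow> w \<in> M \<Longrightarrow> d u w \<le> d u v + d v w"
  unfolding metric_on_def by simp

definition good :: "('a \<Rightarrow> 'a \<Rightarrow> real) \<Rightarrow> ('a \<times> 'a) set \<Rightarrow> bool" where
  "good d P \<longleftrightarrow> finite P \<and> (\<forall>p\<in>P. \<forall>q\<in>P. d (snd p) (snd q) = d (fst p) (fst q))"

lemma goodD: "good d P \<Longrightarrow> (x,z) \<in> P \<Longrightarrow> (x',z') \<in> P \<Longrightarrow> d z z' = d x x'"
  unfolding good_def by (metis fst_conv snd_conv)

lemma good_insert:
  assumes "good d P" "P \<subseteq> M \<times> M" "metric_on M d" "y \<in> M" "z \<in> M"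
    and A: "\<And>x w. (x,w) \<in> P \<Longrightarrow> d z w = d y x"
  shows "good d (insert (y,z) P)"
proof -
  have zz: "d z z = d y y" using metric_zero[OF assms(3) assms(4) assms(4)] metric_zero[OF assms(3) assms(5) assms(5)] by simp
  have B: "d w z = d x y" if "(x,w) \<in> P" for x w
  proof -
    have "x \<in> M" "w \<in> M" using assms(2) that by auto
    then show ?thesis using A[OF that] metric_sym[OF assms(3)] assms(4,5) by metis
  qed
  show ?thesis unfolding good_def
  proof (intro conjI ballI)
    show "finite (insert (y,z) P)" using assms(1) unfolding good_def by simp
    fix p q assume p: "p \<in> insert (y,z) P" and q: "q \<in> insert (y,z) P"
    obtain x1 w1 where p1: "p = (x1,w1)" by fastforce
    obtain x2 w2 where q1: "q = (x2,w2)" by fastforce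
    show "d (snd p) (snd q) = d (fst p) (fst q)"
      using p q unfolding p1 q1
      using A B zz goodD[OF assms(1)] by auto
  qed
qed

lemma good_fun:
  assumes "good d P" "P \<subseteq> M \<times> M" "metric_on M d" "(x,z) \<in> P"
  shows "(SOME z. (x,z) \<in> P) = z"
proof -
  define z' where "z' = (SOME z. (x,z) \<in> P)"
  have ex: "(x, z') \<in> P" unfolding z'_def using assms(4) by (rule someI)
  have "d z z' = d x x" using goodD[OF assms(1,4) ex] .
  moreover have "x \<in> M" "z \<in> M" "z' \<in> M" using assms(2,4) ex by auto
  ultimately show ?thesis using metric_zero[OF assms(3)] unfolding z'_def by metis
qed

lemma good_iso:
  assumes "good d P" "P \<subseteq> M \<times> M" "metric_on M d"
  shows "isometry_onto (fst`P) d (snd`P) d (\<lambda>x. SOME z. (x,z) \<in> P)"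
proof -
  let ?h = "\<lambda>x. SOME z. (x,z) \<in> P"
  have hP: "(x, ?h x) \<in> P" if "x \<in> fst`P" for x
    using that by (auto intro: someI)
  have dist: "\<forall>x\<in>fst`P. \<forall>y\<in>fst`P. d (?h x) (?h y) = d x y"
  proof (intro ballI)
    fix x y assume "x \<in> fst`P" "y \<in> fst`P"
    from goodD[OF assms(1) hP[OF this(1)] hP[OF this(2)]] show "d (?h x) (?h y) = d x y" .
  qed
  have inj: "inj_on ?h (fst`P)"
  proof (rule inj_onI)
    fix x y assume xy: "x \<in> fst`P" "y \<in> fst`P" "?h x = ?h y"
    then have "d x y = d (?h x) (?h x)" using dist by metis
    moreover have "?h x \<in> M" using hP[OF xy(1)] assms(2) by auto
    moreover have "x \<in> M" "y \<in> M" using xy assms(2) by auto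
    ultimately show "x = y" using metric_zero[OF assms(3)] by metis
  qed
  have img: "?h ` fst`P = snd`P"
  proof
    show "?h ` fst`P \<subseteq> snd`P"
    proof
      fix z assume "z \<in> ?h ` fst`P"
      then obtain x where "x \<in> fst`P" "z = ?h x" by blast
      then show "z \<in> snd`P" using hP by (metis snd_conv image_eqI)
    qed
    show "snd`P \<subseteq> ?h ` fst`P"
    proof
      fix z assume "z \<in> snd`P"
      then obtain x where xz: "(x,z) \<in> P" by force
      then have "?h x = z" using good_fun assms by metis
      then show "z \<in> ?h ` fst`P" using xz by force
    qed
  qed
  show ?thesis unfolding isometry_onto_def bij_betw_def using inj img dist by blast
qed


primrec bfseq :: "('a \<Rightarrow> 'a \<Rightarrow> real) \<Rightarrow> 'a set \<Rightarrow> 'a set \<Rightarrow> nat \<Rightarrow> ('a \<times> 'a) set" where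
  "bfseq d Y M 0 = {}"
| "bfseq d Y M (Suc n) =
    (if even n
     then insert (from_nat_into Y (n div 2),
                  SOME z. z \<in> M \<and> good d (insert (from_nat_into Y (n div 2), z) (bfseq d Y M n))) (bfseq d Y M n)
     else insert (SOME y. y \<in> Y \<and> good d (insert (y, from_nat_into M (n div 2)) (bfseq d Y M n)),
                  from_nat_into M (n div 2)) (bfseq d Y M n))"

lemma back_and_forth:
  assumes met: "metric_on M d" and YM: "Y \<subseteq> M" and cM: "countable M" and ne: "M \<noteq> {}"
    and fo: "\<And>P y. good d P \<Longrightarrow> P \<subseteq> Y \<times> M \<Longrightarrow> y \<in> Y \<Longrightarrow> \<exists>z\<in>M. good d (insert (y,z) P)"
    and bk: "\<And>P z. good d P \<Longrightarrow> P \<subseteq> Y \<times> M \<Longrightarrow> z \<in> M \<Longrightarrow> \<exists>y\<in>Y. good d (insert (y,z) P)"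
  shows "\<exists>f. isometry_onto Y d M d f"
proof -
  have neY: "Y \<noteq> {}"
  proof -
    obtain z where "z \<in> M" using ne by blast
    have "good d {}" unfolding good_def by simp
    then show ?thesis using bk[of "{}" z] \<open>z \<in> M\<close> by auto
  qed
  have cY: "countable Y" using cM YM countable_subset by blast
  let ?S = "bfseq d Y M"
  have inv: "good d (?S n) \<and> ?S n \<subseteq> Y \<times> M" for n
  proof (induction n)
    case 0
    then show ?case unfolding good_def by simp
  next
    case (Suc n)
    show ?case
    proof (cases "even n")
      case True
      let ?y = "from_nat_into Y (n div 2)"
      have y: "?y \<in> Y" using from_nat_into[OF neY] .
      from fo[OF _ _ y] Suc obtain z where "z \<in> M \<and> good d (insert (?y,z) (?S n))" by blast
      then have "(SOME z. z \<in> M \<and> good d (insert (?y,z) (?S n))) \<in> M \<and>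
          good d (insert (?y,SOME z. z \<in> M \<and> good d (insert (?y,z) (?S n))) (?S n))"
        by (rule someI)
      then show ?thesis using True Suc y by simp
    next
      case False
      let ?z = "from_nat_into M (n div 2)"
      have z: "?z \<in> M" using from_nat_into[OF ne] .
      from bk[OF _ _ z] Suc obtain y where "y \<in> Y \<and> good d (insert (y,?z) (?S n))" by blast
      then have "(SOME y. y \<in> Y \<and> good d (insert (y,?z) (?S n))) \<in> Y \<and>
          good d (insert (SOME y. y \<in> Y \<and> good d (insert (y,?z) (?S n)), ?z) (?S n))"
        by (rule someI)
      then show ?thesis using False Suc z by simp
    qed
  qed
  have mono: "?S i \<subseteq> ?S j" if "i \<le> j" for i j
    using that
  proof (induction j)
    case 0 then show ?case by simp
  next
    case (Suc j)
    then show ?case by (cases "i = Suc j") (auto simp del: bfseq.simps, auto)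
  qed
  define R where "R = (\<Union>n. ?S n)"
  have RYM: "R \<subseteq> Y \<times> M" unfolding R_def using inv by blast
  have Rd: "d z z' = d x x'" if h12: "(x,z) \<in> R" "(x',z') \<in> R" for x z x' z'
  proof -
    obtain i j where "(x,z) \<in> ?S i" "(x',z') \<in> ?S j" using h12 unfolding R_def by blast
    then have "(x,z) \<in> ?S (max i j)" "(x',z') \<in> ?S (max i j)" using mono[of i "max i j"] mono[of j "max i j"] by auto
    then show ?thesis using goodD inv by metis
  qed
  have covY: "\<exists>z. (y,z) \<in> R" if hy: "y \<in> Y" for y
  proof -
    obtain k where k: "y = from_nat_into Y k" using hy range_from_nat_into[OF neY cY] by blast
    have "even (2*k)" by simp
    then have "(y, SOME z. z \<in> M \<and> good d (insert (from_nat_into Y k, z) (?S (2*k)))) \<in> ?S (Suc (2*k))"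
      using k by simp
    then show ?thesis unfolding R_def by blast
  qed
  have covM: "\<exists>y. (y,z) \<in> R" if hz: "z \<in> M" for z
  proof -
    obtain k where k: "z = from_nat_into M k" using hz range_from_nat_into[OF ne cM] by blast
    define n where "n = 2*k+1"
    have ne1: "\<not> even n" "n div 2 = k" unfolding n_def by simp_all
    have "?S (Suc n) = insert (SOME y. y \<in> Y \<and> good d (insert (y, from_nat_into M k) (?S n)), from_nat_into M k) (?S n)"
      by (simp only: bfseq.simps(2) ne1 if_False)
    then have "(SOME y. y \<in> Y \<and> good d (insert (y, from_nat_into M k) (?S n)), z) \<in> ?S (Suc n)"
      using k by simp
    then show ?thesis unfolding R_def by blast
  qed
  define f where "f x = (SOME z. (x,z) \<in> R)" for x
  have fR: "(x, f x) \<in> R" if "x \<in> Y" for x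
    unfolding f_def using covY[OF that] by (metis someI)
  have fM: "f x \<in> M" if "x \<in> Y" for x using fR[OF that] RYM by auto
  have fd: "d (f x) (f y) = d x y" if "x \<in> Y" "y \<in> Y" for x y
    using Rd fR that by blast
  have inj: "inj_on f Y"
  proof (rule inj_onI)
    fix x y assume xy: "x \<in> Y" "y \<in> Y" "f x = f y"
    then have "d x y = 0" using fd[OF xy(1,2)] metric_zero[OF met] fM by metis
    then show "x = y" using metric_zero[OF met] xy YM by blast
  qed
  have img: "f ` Y = M"
  proof
    show "f ` Y \<subseteq> M" using fM by blast
    show "M \<subseteq> f ` Y"
    proof
      fix z assume z: "z \<in> M"
      then obtain y where yz: "(y,z) \<in> R" using covM by blast
      then have y: "y \<in> Y" using RYM by auto
      have "d z (f y) = d y y" using Rd[OF yz fR[OF y]] .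
      also have "\<dots> = 0" using metric_zero[OF met] y YM by blast
      finally have "z = f y" using metric_zero[OF met] z fM[OF y] by blast
      then show "z \<in> f ` Y" using y by blast
    qed
  qed
  show ?thesis unfolding isometry_onto_def bij_betw_def using inj img fd by blast
qed


lemma realize:
  assumes U: "in_U D M d" and S: "finite S" "S \<subseteq> M" and D0: "0 \<in> D"
    and eD: "\<And>x. x \<in> S \<Longrightarrow> e x \<in> D" and epos: "\<And>x. x \<in> S \<Longrightarrow> e x > 0"
    and t1: "\<And>x y. x \<in> S \<Longrightarrow> y \<in> S \<Longrightarrow> e x \<le> d x y + e y"
    and t2: "\<And>x y. x \<in> S \<Longrightarrow> y \<in> S \<Longrightarrow> d x y \<le> e x + e y"
  shows "\<exists>p\<in>M. \<forall>x\<in>S. d p x = e x"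
proof -
  have met: "metric_on M d" and hom: "homogeneous M d" and ds: "dist_set M d = D"
    and emb: "embeds_all_finite D M d" using U unfolding in_U_def by auto
  obtain idx where bij: "bij_betw idx {0..<card S} S" using ex_bij_betw_nat_finite[OF S(1)] by blast
  define n where "n = card S"
  have bij': "bij_betw idx {..<n} S" using bij unfolding n_def by (simp add: atLeast0LessThan)
  have idxS: "idx i \<in> S" if "i < n" for i using bij' that unfolding bij_betw_def by auto
  have idxM: "idx i \<in> M" if "i < n" for i using idxS[OF that] S(2) by auto
  have idxinj: "idx i = idx j \<longleftrightarrow> i = j" if "i < n" "j < n" for i j
    using bij' that unfolding bij_betw_def inj_on_def by auto
  define E where "E i j = (if i < n \<and> j < n then d (idx i) (idx j)
       else if i = n \<and> j < n then e (idx j) else if j = n \<and> i < n then e (idx i) else 0)" for i j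
  define F where "F = {..n}"
  have dI: "d (idx i) (idx j) \<ge> 0 \<and> (d (idx i) (idx j) = 0 \<longleftrightarrow> i = j) \<and> d (idx i) (idx j) = d (idx j) (idx i)"
    if "i < n" "j < n" for i j
    using metric_nonneg[OF met] metric_zero[OF met] metric_sym[OF met] idxM[OF that(1)] idxM[OF that(2)]
      idxinj[OF that] by metis
  have tI: "d (idx i) (idx k) \<le> d (idx i) (idx j) + d (idx j) (idx k)" if "i < n" "j < n" "k < n" for i j k
    using metric_tri[OF met idxM[OF that(1)] idxM[OF that(2)] idxM[OF that(3)]] .
  have eI: "e (idx i) > 0" if "i < n" for i using epos idxS that by blast
  have t1I: "e (idx i) \<le> d (idx i) (idx j) + e (idx j)" if "i < n" "j < n" for i j
    using t1 idxS that by blast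
  have t2I: "d (idx i) (idx j) \<le> e (idx i) + e (idx j)" if "i < n" "j < n" for i j
    using t2 idxS that by blast
  have cases: "i < n \<or> i = n" if "i \<in> F" for i using that unfolding F_def by auto
  have metF: "metric_on F E"
    unfolding metric_on_def
  proof (intro conjI ballI)
    fix i j assume ij: "i \<in> F" "j \<in> F"
    show "E i j \<ge> 0" using cases[OF ij(1)] cases[OF ij(2)] dI eI unfolding E_def
      by (smt (verit))
    show "E i j = 0 \<longleftrightarrow> i = j" using cases[OF ij(1)] cases[OF ij(2)] dI eI unfolding E_def
      by (smt (verit))
    show "E i j = E j i" using cases[OF ij(1)] cases[OF ij(2)] dI unfolding E_def
      by auto
  next
    fix i j k assume ijk: "i \<in> F" "j \<in> F" "k \<in> F"
    show "E i k \<le> E i j + E j k"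
      using cases[OF ijk(1)] cases[OF ijk(2)] cases[OF ijk(3)]
    proof (elim disjE)
      assume "i < n" "j < n" "k < n" then show ?thesis using tI unfolding E_def by simp
    next
      assume "i < n" "j < n" "k = n" then show ?thesis using t1I unfolding E_def by simp
    next
      assume "i < n" "j = n" "k < n" then show ?thesis using t2I unfolding E_def by simp
    next
      assume "i < n" "j = n" "k = n" then show ?thesis unfolding E_def by simp
    next
      assume "i = n" "j < n" "k < n" then show ?thesis using t1I[of k j] dI[of j k] unfolding E_def by simp
    next
      assume "i = n" "j < n" "k = n" then show ?thesis using eI[of j] unfolding E_def by simp
    next
      assume "i = n" "j = n" "k < n" then show ?thesis unfolding E_def by simp
    next
      assume "i = n" "j = n" "k = n" then show ?thesis unfolding E_def by simp
    qed
  qed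
  have dsF: "dist_set F E \<subseteq> D"
  proof
    fix r assume "r \<in> dist_set F E"
    then obtain i j where ij: "i \<in> F" "j \<in> F" "r = E i j" unfolding dist_set_def by blast
    have inD: "d u v \<in> D" if "u \<in> M" "v \<in> M" for u v
      using that ds unfolding dist_set_def by blast
    show "r \<in> D" using cases[OF ij(1)] cases[OF ij(2)] ij(3) inD idxM eD idxS D0 unfolding E_def
      by auto
  qed
  have "finite F" unfolding F_def by simp
  then obtain g where gM: "g ` F \<subseteq> M" and giso: "isometry_onto F E (g ` F) d g"
    using emb metF dsF unfolding embeds_all_finite_def by blast
  have ginj: "inj_on g F" using giso unfolding isometry_onto_def bij_betw_def by blast
  have gd: "d (g i) (g j) = E i j" if "i \<in> F" "j \<in> F" for i j
    using giso that unfolding isometry_onto_def by blast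
  define A where "A = g ` {..<n}"
  define psi where "psi y = idx (inv_into {..<n} g y)" for y
  have sub: "{..<n} \<subseteq> F" unfolding F_def by auto
  have ginj': "inj_on g {..<n}" using ginj sub inj_on_subset by blast
  have psig: "psi (g i) = idx i" if "i < n" for i
    unfolding psi_def using inv_into_f_f[OF ginj'] that by simp
  have iso: "isometry_onto A d S d psi"
    unfolding isometry_onto_def bij_betw_def
  proof (intro conjI ballI)
    show "inj_on psi A"
    proof (rule inj_onI)
      fix u v assume "u \<in> A" "v \<in> A" "psi u = psi v"
      then obtain i j where "i < n" "j < n" "u = g i" "v = g j" "idx i = idx j"
        unfolding A_def using psig by auto
      then show "u = v" using idxinj by auto
    qed
    show "psi ` A = S" unfolding A_def using psig bij' unfolding bij_betw_def by (auto simp: image_image)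
    fix u v assume "u \<in> A" "v \<in> A"
    then obtain i j where ij: "i < n" "j < n" "u = g i" "v = g j" unfolding A_def by auto
    have "i \<in> F" "j \<in> F" using ij sub by auto
    then show "d (psi u) (psi v) = d u v" using ij psig gd unfolding E_def by simp
  qed
  have "finite A" "A \<subseteq> M" unfolding A_def using gM sub by auto
  then obtain G where Giso: "isometry_onto M d M d G" and GA: "\<forall>x\<in>A. G x = psi x"
    using hom iso S(2) unfolding homogeneous_def by blast
  have nF: "n \<in> F" unfolding F_def by simp
  have gnM: "g n \<in> M" using gM nF by auto
  have GM: "G x \<in> M" if "x \<in> M" for x using Giso that unfolding isometry_onto_def bij_betw_def by auto
  have Gd: "d (G x) (G y) = d x y" if "x \<in> M" "y \<in> M" for x y using Giso that unfolding isometry_onto_def by blast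
  show ?thesis
  proof (intro bexI ballI)
    show "G (g n) \<in> M" using GM gnM .
    fix x assume "x \<in> S"
    then obtain j where j: "j < n" "x = idx j" using bij' unfolding bij_betw_def by auto
    have gj: "g j \<in> M" "j \<in> F" using gM sub j by auto
    have "G (g j) = x" using GA j psig unfolding A_def by auto
    then have "d (G (g n)) x = d (g n) (g j)" using Gd[OF gnM gj(1)] by simp
    also have "\<dots> = E n j" using gd nF gj by simp
    also have "\<dots> = e x" using j unfolding E_def by simp
    finally show "d (G (g n)) x = e x" .
  qed
qed


lemma homD: "homogeneous M d \<Longrightarrow> finite A \<Longrightarrow> A \<subseteq> M \<Longrightarrow> B \<subseteq> M \<Longrightarrow> isometry_onto A d B d f
   \<Longrightarrow> \<exists>g. isometry_onto M d M d g \<and> (\<forall>x\<in>A. g x = f x)"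
  unfolding homogeneous_def by blast

lemma main_general:
  assumes U: "in_U D M d" and aM: "a \<in> M" and mD: "m \<in> D" and mpos: "m > 0" and D0: "0 \<in> D"
  shows "\<exists>f. isometry_onto (M - {x \<in> M. d a x < m}) d M d f"
proof -
  have met: "metric_on M d" and hom: "homogeneous M d" and ds: "dist_set M d = D"
    and cM: "countable M" using U unfolding in_U_def by auto
  define Y where "Y = M - {x \<in> M. d a x < m}"
  have YM: "Y \<subseteq> M" unfolding Y_def by auto
  have Yge: "d a y \<ge> m" if "y \<in> Y" for y using that unfolding Y_def by auto
  have inD: "d u v \<in> D" if "u \<in> M" "v \<in> M" for u v
    using that ds unfolding dist_set_def by blast
  have sym: "\<And>u v. u \<in> M \<Longrightarrow> v \<in> M \<Longrightarrow> d u v = d v u" using metric_sym[OF met] .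
  have zero: "\<And>u v. u \<in> M \<Longrightarrow> v \<in> M \<Longrightarrow> d u v = 0 \<longleftrightarrow> u = v" using metric_zero[OF met] .
  have nn: "\<And>u v. u \<in> M \<Longrightarrow> v \<in> M \<Longrightarrow> d u v \<ge> 0" using metric_nonneg[OF met] .
  have tri: "\<And>u v w. u \<in> M \<Longrightarrow> v \<in> M \<Longrightarrow> w \<in> M \<Longrightarrow> d u w \<le> d u v + d v w" using metric_tri[OF met] .
  have "\<exists>f. isometry_onto Y d M d f"
  proof (rule back_and_forth[OF met YM cM])
    show "M \<noteq> {}" using aM by blast
  next
    fix P y assume gP: "good d P" and PY: "P \<subseteq> Y \<times> M" and y: "y \<in> Y"
    have PM: "P \<subseteq> M \<times> M" using PY YM by auto
    let ?h = "\<lambda>x. SOME z. (x,z) \<in> P"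
    have iso: "isometry_onto (fst`P) d (snd`P) d ?h" using good_iso[OF gP PM met] .
    have "finite (fst`P)" using gP unfolding good_def by simp
    moreover have "fst`P \<subseteq> M" "snd`P \<subseteq> M" using PM by auto
    ultimately have "\<exists>g. isometry_onto M d M d g \<and> (\<forall>x\<in>fst`P. g x = ?h x)"
      by (rule homD[OF hom _ _ _ iso])
    then obtain g where giso: "isometry_onto M d M d g" and gA: "\<forall>x\<in>fst`P. g x = ?h x"
      by blast
    have yM: "y \<in> M" using y YM by auto
    have gyM: "g y \<in> M" using giso yM unfolding isometry_onto_def bij_betw_def by auto
    have "good d (insert (y, g y) P)"
    proof (rule good_insert[OF gP PM met yM gyM])
      fix x w assume xw: "(x,w) \<in> P"
      have xf: "x \<in> fst`P" using xw by force
      have "g x = ?h x" using gA xf by blast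
      also have "?h x = w" using good_fun[OF gP PM met xw] .
      finally have gx: "g x = w" .
      have xM: "x \<in> M" using xw PM by auto
      have "d (g y) (g x) = d y x" using giso yM xM unfolding isometry_onto_def by blast
      then show "d (g y) w = d y x" using gx by simp
    qed
    then show "\<exists>z\<in>M. good d (insert (y,z) P)" using gyM by blast
  next
    fix P z assume gP: "good d P" and PY: "P \<subseteq> Y \<times> M" and z: "z \<in> M"
    have PM: "P \<subseteq> M \<times> M" using PY YM by auto
    define P' where "P' = (\<lambda>(x,w). (w,x)) ` P"
    have P'M: "P' \<subseteq> M \<times> M" using PM unfolding P'_def by auto
    have gP': "good d P'" unfolding good_def
    proof (intro conjI ballI)
      show "finite P'" using gP unfolding good_def P'_def by simp
      fix p q assume "p \<in> P'" "q \<in> P'"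
      then obtain x w x' w' where "(x,w) \<in> P" "(x',w') \<in> P" "p = (w,x)" "q = (w',x')"
        unfolding P'_def by auto
      then show "d (snd p) (snd q) = d (fst p) (fst q)" using goodD[OF gP] by simp
    qed
    have fs: "fst`P' = snd`P" "snd`P' = fst`P" unfolding P'_def by force+
    let ?h = "\<lambda>x. SOME z. (x,z) \<in> P'"
    have iso: "isometry_onto (snd`P) d (fst`P) d ?h" using good_iso[OF gP' P'M met] fs by simp
    have "finite (snd`P)" using gP unfolding good_def by simp
    moreover have "snd`P \<subseteq> M" "fst`P \<subseteq> M" using PM by auto
    ultimately have "\<exists>g. isometry_onto M d M d g \<and> (\<forall>x\<in>snd`P. g x = ?h x)"
      by (rule homD[OF hom _ _ _ iso])
    then obtain g where giso: "isometry_onto M d M d g" and gA: "\<forall>x\<in>snd`P. g x = ?h x"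
      by blast
    define q where "q = g z"
    have qM: "q \<in> M" using giso z unfolding isometry_onto_def bij_betw_def q_def by auto
    have qd: "d q x = d z w" if xw: "(x,w) \<in> P" for x w
    proof -
      have "(w,x) \<in> P'" using xw unfolding P'_def by force
      then have "g w = x" using gA good_fun[OF gP' P'M met] xw by force
      moreover have "w \<in> M" using xw PM by auto
      ultimately show ?thesis using giso z unfolding isometry_onto_def q_def by metis
    qed
    show "\<exists>y\<in>Y. good d (insert (y,z) P)"
    proof (cases "q \<in> Y")
      case True
      have "good d (insert (q,z) P)"
        by (rule good_insert[OF gP PM met qM z]) (simp add: qd)
      then show ?thesis using True by blast
    next
      case False
      then have aq: "d a q < m" using qM unfolding Y_def by auto
      have aY: "a \<notin> Y" using zero[OF aM aM] mpos unfolding Y_def by auto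
      define S where "S = insert a (fst`P)"
      define e where "e x = (if x = a then m else d q x)" for x
      have fY: "fst`P \<subseteq> Y" using PY by auto
      have SM: "S \<subseteq> M" unfolding S_def using aM PM by auto
      have ex: "\<exists>p\<in>M. \<forall>x\<in>S. d p x = e x"
      proof (rule realize[OF U])
        show "finite S" using gP unfolding good_def S_def by simp
        show "S \<subseteq> M" using SM .
        show "0 \<in> D" using D0 .
        fix x assume xS: "x \<in> S"
        then have xM: "x \<in> M" using SM by auto
        show "e x \<in> D" unfolding e_def using mD inD[OF qM xM] by simp
        show "e x > 0"
        proof (cases "x = a")
          case True then show ?thesis unfolding e_def using mpos by simp
        next
          case False
          then have "x \<in> Y" using xS fY unfolding S_def by auto
          then have "q \<noteq> x" using \<open>q \<notin> Y\<close> by auto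
          then show ?thesis unfolding e_def using False zero[OF qM xM] nn[OF qM xM] by auto
        qed
      next
        fix x y assume xS: "x \<in> S" and yS: "y \<in> S"
        then have xM: "x \<in> M" and yM: "y \<in> M" using SM by auto
        have xY: "x \<noteq> a \<Longrightarrow> x \<in> Y" and yY: "y \<noteq> a \<Longrightarrow> y \<in> Y" using xS yS fY unfolding S_def by auto
        have aqs: "d q a < m" using aq sym[OF aM qM] by simp
        show "e x \<le> d x y + e y"
        proof (cases "x = a")
          case xa: True
          show ?thesis
          proof (cases "y = a")
            case True then show ?thesis using xa zero[OF aM aM] unfolding e_def by simp
          next
            case False
            then have "d a y \<ge> m" using Yge yY by blast
            then show ?thesis using xa False nn[OF qM yM] unfolding e_def by simp
          qed
        next
          case xa: False
          show ?thesis
          proof (cases "y = a")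
            case True
            have "d q x \<le> d q a + d a x" using tri[OF qM aM xM] .
            then show ?thesis using xa True aqs sym[OF aM xM] unfolding e_def by simp
          next
            case False
            have "d q x \<le> d q y + d y x" using tri[OF qM yM xM] .
            then show ?thesis using xa False sym[OF xM yM] unfolding e_def by simp
          qed
        qed
        show "d x y \<le> e x + e y"
        proof (cases "x = a")
          case xa: True
          show ?thesis
          proof (cases "y = a")
            case True then show ?thesis using xa zero[OF aM aM] mpos unfolding e_def by simp
          next
            case False
            have "d a y \<le> d a q + d q y" using tri[OF aM qM yM] .
            then show ?thesis using xa False aq unfolding e_def by simp
          qed
        next
          case xa: False
          show ?thesis
          proof (cases "y = a")
            case True
            have "d x a \<le> d x q + d q a" using tri[OF xM qM aM] .
            then show ?thesis using xa True aqs sym[OF xM qM] unfolding e_def by simp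
          next
            case False
            have "d x y \<le> d x q + d q y" using tri[OF xM qM yM] .
            then show ?thesis using xa False sym[OF xM qM] unfolding e_def by simp
          qed
        qed
      qed
      then obtain p where pM: "p \<in> M" and pS: "\<forall>x\<in>S. d p x = e x" by blast
      have "d a p = m" using pS sym[OF aM pM] unfolding S_def e_def by simp
      then have pY: "p \<in> Y" using pM unfolding Y_def by auto
      have "good d (insert (p,z) P)"
      proof (rule good_insert[OF gP PM met pM z])
        fix x w assume xw: "(x,w) \<in> P"
        then have "x \<in> fst`P" by force
        then have "x \<in> S" "x \<noteq> a" using fY aY unfolding S_def by auto
        then have "d p x = d q x" using pS unfolding e_def by simp
        then show "d z w = d p x" using qd[OF xw] by simp
      qed
      then show ?thesis using pY by blast
    qed
  qed
  then show ?thesis unfolding Y_def .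
qed


theorem lemma9p1:
  fixes D :: "real set" and B :: "real set" and M :: "'a set" and d :: "'a \<Rightarrow> 'a \<Rightarrow> real" and a :: 'a
  assumes "dist_candidate D"
    and "universal_dist D"
    and "\<exists>B1 B2. is_block D B1 \<and> is_block D B2 \<and> B1 \<noteq> B2"
    and "is_block D B" and "Min (D - {0}) \<in> B"
    and "in_U D M d"
    and "a \<in> M"
  shows "\<exists>f. isometry_onto (M - {x \<in> M. d a x < Max B}) d M d f"
proof -
  have fD: "finite D" and D0: "0 \<in> D" and Dnn: "\<forall>x\<in>D. 0 \<le> x"
    using assms(1) unfolding dist_candidate_def by auto
  have Bne: "B \<noteq> {}" and BD: "B \<subseteq> D - {0}"
    using assms(4) unfolding is_block_def block_cond_def by auto
  have fB: "finite B" using BD fD finite_subset by blast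
  have mB: "Max B \<in> B" using Max_in[OF fB Bne] .
  then have mD: "Max B \<in> D" and m0: "Max B \<noteq> 0" using BD by auto
  then have mpos: "Max B > 0" using Dnn by force
  show ?thesis using main_general[OF assms(6) assms(7) mD mpos D0] .
qed

end
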